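(* Let $\epsilon>1$ and $\beta>0$. The scalar system $$\dot x=-\beta\frac{x}{(1+x^2)^{1/2}},\qquad x\in\mathbb{R},$$ is $SISS_L\!\left(\frac{\beta}{2},\frac{2\epsilon}{\beta}\right)$, its origin is globally asymptotically stable, and its linearization at $0$ is asymptotically stable.
   Context: Eventually bounded: $f:\mathbb{R}_{\ge0}\to\mathbb{R}^k$ is eventually bounded by $\delta$ if there is $T>0$ with $\|f(t)\|\le\delta$ for all $t\ge T$. $SISS_L(\Delta,N)$ for an input-free system $\dot x=f(x)$: for every $\delta\in(0,\Delta]$ and every bounded measurable $e:\mathbb{R}_{\ge0}\to\mathbb{R}^n$ eventually bounded by $\delta$, every solution of $\dot x=f(x)+e(t)$ is eventually bounded by $N\delta$. *)

theory Defs
  imports "HOL-Analysis.Analysis"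
begin

text \<open>Signals are functions on the reals; only their values on [0,\<infinity>) matter.\<close>

definition eventually_bounded :: "(real \<Rightarrow> 'a::real_normed_vector) \<Rightarrow> real \<Rightarrow> bool" where
  "eventually_bounded g \<delta> \<longleftrightarrow> (\<exists>T>0. \<forall>t\<ge>T. norm (g t) \<le> \<delta>)"

definition bounded_measurable_input :: "(real \<Rightarrow> 'a::euclidean_space) \<Rightarrow> bool" where
  "bounded_measurable_input e \<longleftrightarrow>
     set_borel_measurable lborel {0..} e \<and> bounded (e ` {0..})"

text \<open>(Caratheodory) solution on [0,\<infinity>) of  x' = f x + e t : integral equation.\<close>
definition perturbed_solution ::
  "('a::euclidean_space \<Rightarrow> 'a) \<Rightarrow> (real \<Rightarrow> 'a) \<Rightarrow> (real \<Rightarrow> 'a) \<Rightarrow> bool" where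
  "perturbed_solution f e x \<longleftrightarrow>
     (\<forall>t\<ge>0. ((\<lambda>s. f (x s) + e s) has_integral (x t - x 0)) {0..t})"

definition SISS_L :: "real \<Rightarrow> real \<Rightarrow> ('a::euclidean_space \<Rightarrow> 'a) \<Rightarrow> bool" where
  "SISS_L \<Delta> N f \<longleftrightarrow>
     (\<forall>\<delta>. 0 < \<delta> \<and> \<delta> \<le> \<Delta> \<longrightarrow>
        (\<forall>e. bounded_measurable_input e \<and> eventually_bounded e \<delta> \<longrightarrow>
           (\<forall>x. perturbed_solution f e x \<longrightarrow> eventually_bounded x (N * \<delta>))))"

definition ode_solution :: "('a::euclidean_space \<Rightarrow> 'a) \<Rightarrow> (real \<Rightarrow> 'a) \<Rightarrow> bool" where
  "ode_solution f x \<longleftrightarrow> (\<forall>t\<ge>0. (x has_vector_derivative f (x t)) (at t within {0..}))"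

definition lyapunov_stable_origin :: "('a::euclidean_space \<Rightarrow> 'a) \<Rightarrow> bool" where
  "lyapunov_stable_origin f \<longleftrightarrow> f 0 = 0 \<and>
     (\<forall>\<epsilon>>0. \<exists>\<delta>>0. \<forall>x. ode_solution f x \<and> norm (x 0) < \<delta> \<longrightarrow> (\<forall>t\<ge>0. norm (x t) < \<epsilon>))"

definition asymptotically_stable_origin :: "('a::euclidean_space \<Rightarrow> 'a) \<Rightarrow> bool" where
  "asymptotically_stable_origin f \<longleftrightarrow> lyapunov_stable_origin f \<and>
     (\<exists>r>0. \<forall>x. ode_solution f x \<and> norm (x 0) < r \<longrightarrow> (x \<longlongrightarrow> 0) at_top)"

definition globally_asymptotically_stable_origin :: "('a::euclidean_space \<Rightarrow> 'a) \<Rightarrow> bool" where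
  "globally_asymptotically_stable_origin f \<longleftrightarrow> lyapunov_stable_origin f \<and>
     (\<forall>x. ode_solution f x \<longrightarrow> (x \<longlongrightarrow> 0) at_top)"

definition linearization_asymptotically_stable :: "('a::euclidean_space \<Rightarrow> 'a) \<Rightarrow> bool" where
  "linearization_asymptotically_stable f \<longleftrightarrow>
     (\<exists>L. (f has_derivative L) (at 0) \<and> asymptotically_stable_origin L)"

end

theory Submission
  imports Defs
begin


lemma seg:
  fixes g x :: "real \<Rightarrow> real"
  assumes h: "\<forall>t\<ge>0. (g has_integral (x t - x 0)) {0..t}" and "0 \<le> s" "s \<le> t"
  shows "(g has_integral (x t - x s)) {s..t}"
proof -
  have it: "(g has_integral (x t - x 0)) {0..t}" using h assms by auto
  have is': "(g has_integral (x s - x 0)) {0..s}" using h assms by auto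
  have "g integrable_on {s..t}"
    using integrable_subinterval_real[OF has_integral_integrable[OF it]] assms by auto
  then have j: "(g has_integral integral {s..t} g) {s..t}" by (simp add: integrable_integral)
  have "(g has_integral (x s - x 0 + integral {s..t} g)) {0..t}"
    using has_integral_combine[OF assms(2,3) is' j] .
  then have "x s - x 0 + integral {s..t} g = x t - x 0" using it has_integral_unique by blast
  then show ?thesis using j by (metis add_diff_cancel_left' diff_add_cancel diff_diff_eq2)
qed

lemma stay:
  fixes x :: "real \<Rightarrow> real"
  assumes cont: "continuous_on {0..} x"
    and H2: "\<And>s t. T \<le> s \<Longrightarrow> s \<le> t \<Longrightarrow> (\<forall>u\<in>{s..t}. x u \<ge> c1) \<Longrightarrow> x t \<le> x s - \<eta> * (t - s)"
    and "0 \<le> T" "T \<le> t1" "x t1 \<le> c1" "\<eta> > 0" "t1 \<le> t"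
  shows "x t \<le> c1"
proof (rule ccontr)
  assume xt: "\<not> x t \<le> c1"
  have contI: "continuous_on {a..b} x" if "0 \<le> a" for a b
    using continuous_on_subset[OF cont] that by auto
  define S where "S = {u \<in> {t1..t}. x u = c1}"
  have "\<exists>u. t1 \<le> u \<and> u \<le> t \<and> x u = c1"
    using IVT'[of x t1 c1 t] assms xt contI by auto
  then have ne: "S \<noteq> {}" unfolding S_def by auto
  have cl: "closed S" unfolding S_def
    by (rule continuous_closed_preimage_constant) (use contI assms in auto)
  have bd: "bdd_above S" unfolding S_def by (auto intro: bdd_aboveI[of _ t])
  define s where "s = Sup S"
  have sS: "s \<in> S" unfolding s_def using closed_contains_Sup[OF ne bd cl] .
  have above: "\<forall>u\<in>{s..t}. x u \<ge> c1"
  proof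
    fix u assume u: "u \<in> {s..t}"
    show "x u \<ge> c1"
    proof (rule ccontr)
      assume "\<not> c1 \<le> x u"
      then obtain v where v: "u \<le> v" "v \<le> t" "x v = c1"
        using IVT'[of x u c1 t] u xt contI[of u t] sS assms unfolding S_def by auto
      have "v \<in> S" using v u sS unfolding S_def by auto
      then have "v \<le> s" unfolding s_def using bd by (simp add: cSup_upper)
      then have "v = s" "u = s" using v u by auto
      then show False using \<open>\<not> c1 \<le> x u\<close> sS unfolding S_def by auto
    qed
  qed
  have "T \<le> s" "s \<le> t" using sS assms unfolding S_def by auto
  from H2[OF this above] have "x t \<le> x s - \<eta> * (t - s)" .
  moreover have "x s = c1" using sS unfolding S_def by auto
  moreover have "\<eta> * (t - s) \<ge> 0" using assms \<open>s \<le> t\<close> by simp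
  ultimately show False using xt by linarith
qed

lemma not_forever:
  fixes x :: "real \<Rightarrow> real"
  assumes H2: "\<And>s t. T \<le> s \<Longrightarrow> s \<le> t \<Longrightarrow> (\<forall>u\<in>{s..t}. x u \<ge> c1) \<Longrightarrow> x t \<le> x s - \<eta> * (t - s)"
    and "\<eta> > 0" and all: "\<forall>u\<ge>T. x u \<ge> c1"
  shows False
proof -
  define t where "t = T + (\<bar>x T - c1\<bar>) / \<eta> + 1"
  have "T \<le> t" unfolding t_def using assms by auto
  then have "x t \<le> x T - \<eta> * (t - T)" using H2[of T t] all by auto
  also have "\<eta> * (t - T) = \<bar>x T - c1\<bar> + \<eta>" unfolding t_def using assms by (simp add: field_simps)
  finally have "x t < c1" using assms by linarith
  then show False using all \<open>T \<le> t\<close> by force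
qed

lemma core:
  fixes x :: "real \<Rightarrow> real"
  assumes cont: "continuous_on {0..} x"
    and H2: "\<And>s t. T \<le> s \<Longrightarrow> s \<le> t \<Longrightarrow> (\<forall>u\<in>{s..t}. x u \<ge> c1) \<Longrightarrow> x t \<le> x s - \<eta> * (t - s)"
    and H3: "\<And>s t. T \<le> s \<Longrightarrow> s \<le> t \<Longrightarrow> (\<forall>u\<in>{s..t}. - x u \<ge> c1) \<Longrightarrow> - x t \<le> - x s - \<eta> * (t - s)"
    and "0 \<le> T" "\<eta> > 0" "c1 > 0"
  shows "\<exists>T'>0. \<forall>t\<ge>T'. \<bar>x t\<bar> \<le> c1"
proof -
  have cont': "continuous_on {0..} (\<lambda>u. - x u)" using cont by (intro continuous_intros)
  have contI: "continuous_on {a..b} x" if "0 \<le> a" for a b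
    using continuous_on_subset[OF cont] that by auto
  have "\<exists>t1\<ge>T. \<bar>x t1\<bar> \<le> c1"
  proof (rule ccontr)
    assume "\<not> ?thesis"
    then have big: "\<forall>u\<ge>T. \<bar>x u\<bar> > c1" by force
    show False
    proof (cases "x T > 0")
      case True
      have "\<forall>u\<ge>T. x u \<ge> c1"
      proof (intro allI impI)
        fix u assume u: "T \<le> u"
        show "c1 \<le> x u"
        proof (rule ccontr)
          assume "\<not> c1 \<le> x u"
          then have "x u < 0" using big u by force
          then obtain v where "T \<le> v" "v \<le> u" "x v = 0"
            using IVT2'[of x u 0 T] True u contI[of T u] assms by auto
          then show False using big assms by force
        qed
      qed
      then show False using not_forever[OF H2 assms(5)] by blast
    next
      case False
      then have "x T < 0" using big assms by force
      have "\<forall>u\<ge>T. - x u \<ge> c1"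
      proof (intro allI impI)
        fix u assume u: "T \<le> u"
        show "c1 \<le> - x u"
        proof (rule ccontr)
          assume "\<not> c1 \<le> - x u"
          then have "x u > 0" using big u by force
          then obtain v where "T \<le> v" "v \<le> u" "x v = 0"
            using IVT'[of x T 0 u] \<open>x T < 0\<close> u contI[of T u] assms by auto
          then show False using big assms by force
        qed
      qed
      then show False using not_forever[where x="\<lambda>u. - x u" and T=T, OF H3 assms(5)] by blast
    qed
  qed
  then obtain t1 where t1: "T \<le> t1" "\<bar>x t1\<bar> \<le> c1" by blast
  have "\<forall>t\<ge>max t1 1. \<bar>x t\<bar> \<le> c1"
  proof (intro allI impI)
    fix t assume "max t1 1 \<le> t"
    then have "t1 \<le> t" by simp
    have a: "x t \<le> c1" using stay[OF cont H2 assms(4) t1(1) _ assms(5) \<open>t1 \<le> t\<close>] t1 by auto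
    have b: "- x t \<le> c1" using stay[OF cont' H3 assms(4) t1(1) _ assms(5) \<open>t1 \<le> t\<close>] t1 by auto
    show "\<bar>x t\<bar> \<le> c1" using a b by linarith
  qed
  then show ?thesis by (intro exI[of _ "max t1 1"]) auto
qed



lemma exp_decay_lim:
  fixes k :: real assumes "k > 0"
  shows "((\<lambda>t. exp (- k * t)) \<longlongrightarrow> 0) at_top"
proof -
  have "filterlim (\<lambda>t. k * t) at_top at_top"
    using filterlim_tendsto_pos_mult_at_top[OF tendsto_const assms filterlim_ident] .
  then have "filterlim (\<lambda>t. exp (k * t)) at_top at_top"
    using filterlim_compose[OF exp_at_top] by blast
  then have "((\<lambda>t. inverse (exp (k * t))) \<longlongrightarrow> 0) at_top"
    using tendsto_inverse_0_at_top by blast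
  then show ?thesis by (simp add: exp_minus)
qed
lemma decay:
  fixes g x :: "real \<Rightarrow> real"
  assumes sol: "ode_solution g x" and "\<kappa> \<ge> 0"
    and cond: "\<forall>t\<ge>0. x t * g (x t) \<le> - \<kappa> * (x t)\<^sup>2" and "t \<ge> 0"
  shows "(x t)\<^sup>2 * exp (2*\<kappa>*t) \<le> (x 0)\<^sup>2"
proof -
  define h where "h u = (x u)\<^sup>2 * exp (2*\<kappa>*u)" for u
  have xd: "(x has_real_derivative g (x u)) (at u within {0..})" if "u \<ge> 0" for u
    using sol that unfolding ode_solution_def
    by (simp add: has_real_derivative_iff_has_vector_derivative)
  have hd: "(h has_real_derivative (2 * x u * g (x u) * exp (2*\<kappa>*u) + (x u)\<^sup>2 * (exp (2*\<kappa>*u) * (2*\<kappa>)))) (at u within {0..})"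
    if "u \<ge> 0" for u
  proof -
    have a: "((\<lambda>u. (x u)\<^sup>2) has_real_derivative (of_nat 2 * (g (x u) * x u ^ (2 - Suc 0)))) (at u within {0..})"
      by (rule DERIV_power[OF xd[OF that]])
    have b: "((\<lambda>u. exp (2*\<kappa>*u)) has_real_derivative (exp (2*\<kappa>*u) * (2*\<kappa>))) (at u within {0..})"
      by (rule DERIV_chain2[OF DERIV_exp]) (auto intro!: derivative_eq_intros)
    have c: "(h has_real_derivative ((of_nat 2 * (g (x u) * x u ^ (2 - Suc 0))) * exp (2*\<kappa>*u) + (exp (2*\<kappa>*u) * (2*\<kappa>)) * (x u)\<^sup>2)) (at u within {0..})"
      unfolding h_def by (rule DERIV_mult[OF a b])
    show ?thesis using c by (simp add: algebra_simps)
  qed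
  have cont: "continuous_on {0..} h"
    unfolding continuous_on_eq_continuous_within
  proof
    fix u :: real assume "u \<in> {0..}"
    then show "continuous (at u within {0..}) h"
      using hd[of u] DERIV_continuous by auto
  qed
  have "h t \<le> h 0"
  proof (rule DERIV_nonpos_imp_decreasing_open[OF assms(4)])
    fix u assume u: "0 < u" "u < t"
    have "at u within {0..} = at u" by (rule at_within_interior) (use u in auto)
    moreover have "2 * x u * g (x u) * exp (2*\<kappa>*u) + (x u)\<^sup>2 * (exp (2*\<kappa>*u) * (2*\<kappa>)) \<le> 0"
    proof -
      have "2 * x u * g (x u) * exp (2*\<kappa>*u) + (x u)\<^sup>2 * (exp (2*\<kappa>*u) * (2*\<kappa>))
          = 2 * exp (2*\<kappa>*u) * (x u * g (x u) + \<kappa> * (x u)\<^sup>2)" by (simp add: algebra_simps)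
      moreover have "x u * g (x u) + \<kappa> * (x u)\<^sup>2 \<le> 0" using cond[rule_format, of u] u by linarith
      ultimately show ?thesis by (simp add: mult_nonneg_nonpos)
    qed
    ultimately show "\<exists>y. (h has_real_derivative y) (at u) \<and> y \<le> 0"
      using hd[of u] u by auto
  next
    show "continuous_on {0..t} h" using continuous_on_subset[OF cont] by auto
  qed
  then show ?thesis unfolding h_def by simp
qed



lemma conv:
  fixes g x :: "real \<Rightarrow> real"
  assumes sol: "ode_solution g x" and k: "\<kappa> > 0"
    and cond: "\<forall>t\<ge>0. x t * g (x t) \<le> - \<kappa> * (x t)\<^sup>2"
  shows "(x \<longlongrightarrow> 0) at_top"
proof (rule Lim_null_comparison)
  show "\<forall>\<^sub>F t in at_top. norm (x t) \<le> \<bar>x 0\<bar> * exp (- \<kappa> * t)"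
    unfolding eventually_at_top_linorder
  proof (intro exI[of _ 0] allI impI)
    fix t :: real assume t: "0 \<le> t"
    have d: "(x t)\<^sup>2 * exp (2*\<kappa>*t) \<le> (x 0)\<^sup>2" using decay[OF sol less_imp_le[OF k] cond t] .
    define E where "E = exp (\<kappa>*t)"
    have Ep: "E > 0" unfolding E_def by simp
    have E2: "exp (2*\<kappa>*t) = E * E" unfolding E_def
      by (metis exp_add mult_2 mult.assoc)
    have Em: "exp (-\<kappa>*t) = inverse E" unfolding E_def
      by (metis exp_minus minus_mult_left)
    have "(x t)\<^sup>2 = (x t)\<^sup>2 * exp (2*\<kappa>*t) * exp (-\<kappa>*t)^2"
      unfolding E2 Em using Ep by (simp add: field_simps power2_eq_square)
    also have "\<dots> \<le> (x 0)\<^sup>2 * exp (-\<kappa>*t)^2" by (rule mult_right_mono[OF d]) simp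
    also have "\<dots> = (\<bar>x 0\<bar> * exp (- \<kappa> * t))\<^sup>2" by (simp only: power_mult_distrib power2_abs)
    finally have "(x t)\<^sup>2 \<le> (\<bar>x 0\<bar> * exp (- \<kappa> * t))\<^sup>2" .
    then have "\<bar>x t\<bar>\<^sup>2 \<le> (\<bar>x 0\<bar> * exp (- \<kappa> * t))\<^sup>2" by (simp only: power2_abs)
    then have "\<bar>x t\<bar> \<le> \<bar>x 0\<bar> * exp (- \<kappa> * t)"
      by (rule power2_le_imp_le) simp
    then show "norm (x t) \<le> \<bar>x 0\<bar> * exp (- \<kappa> * t)" by (simp only: real_norm_def)
  qed
  have "((\<lambda>t. \<bar>x 0\<bar> * exp (- \<kappa> * t)) \<longlongrightarrow> \<bar>x 0\<bar> * 0) at_top"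
    by (rule tendsto_mult[OF tendsto_const exp_decay_lim[OF k]])
  then show "((\<lambda>t. \<bar>x 0\<bar> * exp (- \<kappa> * t)) \<longlongrightarrow> 0) at_top" by (simp only: mult_zero_right)
qed



lemma f_sign:
  fixes \<beta> y :: real assumes "\<beta> > 0"
  shows "y * (- \<beta> * y / sqrt (1 + y\<^sup>2)) \<le> 0"
proof -
  have "y * (- \<beta> * y / sqrt (1 + y\<^sup>2)) = - (\<beta> * y\<^sup>2 / sqrt (1 + y\<^sup>2))"
    by (simp add: power2_eq_square)
  moreover have "0 \<le> \<beta> * y\<^sup>2 / sqrt (1 + y\<^sup>2)" using assms by simp
  ultimately show ?thesis by linarith
qed

lemma f_sign2:
  fixes \<beta> y R :: real assumes "\<beta> > 0" "\<bar>y\<bar> \<le> R"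
  shows "y * (- \<beta> * y / sqrt (1 + y\<^sup>2)) \<le> - (\<beta> / sqrt (1 + R\<^sup>2)) * y\<^sup>2"
proof -
  have s: "sqrt (1 + y\<^sup>2) \<le> sqrt (1 + R\<^sup>2)"
    using assms abs_le_square_iff[of y R] by (simp add: power2_abs) 
  have "\<beta> * y\<^sup>2 / sqrt (1 + R\<^sup>2) \<le> \<beta> * y\<^sup>2 / sqrt (1 + y\<^sup>2)"
    by (rule divide_left_mono[OF s]) (use assms in \<open>auto intro!: mult_pos_pos add_pos_nonneg\<close>)
  moreover have "y * (- \<beta> * y / sqrt (1 + y\<^sup>2)) = - (\<beta> * y\<^sup>2 / sqrt (1 + y\<^sup>2))"
    by (simp add: power2_eq_square)
  moreover have "- (\<beta> / sqrt (1 + R\<^sup>2)) * y\<^sup>2 = - (\<beta> * y\<^sup>2 / sqrt (1 + R\<^sup>2))"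
    by simp
  ultimately show ?thesis by linarith
qed

lemma bounded_by_init:
  fixes g x :: "real \<Rightarrow> real"
  assumes sol: "ode_solution g x" and cond: "\<forall>t\<ge>0. x t * g (x t) \<le> 0" and "t \<ge> 0"
  shows "\<bar>x t\<bar> \<le> \<bar>x 0\<bar>"
proof -
  have "(x t)\<^sup>2 * exp (2*0*t) \<le> (x 0)\<^sup>2"
    by (rule decay[OF sol _ _ assms(3)]) (use cond in auto)
  then have "\<bar>x t\<bar>\<^sup>2 \<le> \<bar>x 0\<bar>\<^sup>2" by simp
  then show ?thesis by (rule power2_le_imp_le) simp
qed

lemma lyap:
  fixes g :: "real \<Rightarrow> real"
  assumes "g 0 = 0" and cond: "\<forall>y. y * g y \<le> 0"
  shows "lyapunov_stable_origin g"
  unfolding lyapunov_stable_origin_def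
proof (intro conjI assms allI impI )
  fix \<epsilon> :: real assume "\<epsilon> > 0"
  show "\<exists>\<delta>>0. \<forall>x. ode_solution g x \<and> norm (x 0) < \<delta> \<longrightarrow> (\<forall>t\<ge>0. norm (x t) < \<epsilon>)"
  proof (intro exI[of _ \<epsilon>] conjI allI impI)
    fix x t assume "ode_solution g x \<and> norm (x 0) < \<epsilon>" "(0::real) \<le> t"
    then show "norm (x t) < \<epsilon>" using bounded_by_init[of g x t] cond by force
  qed (use \<open>\<epsilon> > 0\<close> in auto)
qed

lemma gas:
  fixes \<beta> :: real assumes b: "\<beta> > 0"
  shows "globally_asymptotically_stable_origin (\<lambda>x::real. - \<beta> * x / sqrt (1 + x\<^sup>2))"
  unfolding globally_asymptotically_stable_origin_def
proof (intro conjI allI impI)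
  show "lyapunov_stable_origin (\<lambda>x::real. - \<beta> * x / sqrt (1 + x\<^sup>2))"
    by (rule lyap) (use f_sign[OF b] in auto)
next
  fix x :: "real \<Rightarrow> real"
  assume sol: "ode_solution (\<lambda>x::real. - \<beta> * x / sqrt (1 + x\<^sup>2)) x"
  define R where "R = \<bar>x 0\<bar>"
  have bd: "\<bar>x t\<bar> \<le> R" if "t \<ge> 0" for t
    unfolding R_def by (rule bounded_by_init[OF sol _ that]) (use f_sign[OF b] in auto)
  show "(x \<longlongrightarrow> 0) at_top"
  proof (rule conv[OF sol])
    show "\<beta> / sqrt (1 + R\<^sup>2) > 0" using b by (simp add: add_pos_nonneg)
    show "\<forall>t\<ge>0. x t * (- \<beta> * x t / sqrt (1 + (x t)\<^sup>2)) \<le> - (\<beta> / sqrt (1 + R\<^sup>2)) * (x t)\<^sup>2"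
      using f_sign2[OF b bd] by auto
  qed
qed

lemma lin:
  fixes \<beta> :: real assumes b: "\<beta> > 0"
  shows "linearization_asymptotically_stable (\<lambda>x::real. - \<beta> * x / sqrt (1 + x\<^sup>2))"
  unfolding linearization_asymptotically_stable_def
proof (intro exI conjI)
  have "((\<lambda>x::real. - \<beta> * x / sqrt (1 + x\<^sup>2)) has_real_derivative - \<beta>) (at 0)"
    by (auto intro!: derivative_eq_intros)
  then show "((\<lambda>x::real. - \<beta> * x / sqrt (1 + x\<^sup>2)) has_derivative (*) (- \<beta>)) (at 0)"
    by (simp add: has_field_derivative_def)
  have c: "\<forall>y. y * (- \<beta> * y) \<le> - \<beta> * y\<^sup>2" by (simp add: power2_eq_square)
  show "asymptotically_stable_origin ((*) (- \<beta>))"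
    unfolding asymptotically_stable_origin_def
  proof (intro conjI exI[of _ 1] allI impI)
    show "lyapunov_stable_origin ((*) (- \<beta>))"
      by (rule lyap) (use b in \<open>auto simp: mult.left_commute[of _ \<beta>]\<close>)
    fix x :: "real \<Rightarrow> real" assume "ode_solution ((*) (- \<beta>)) x \<and> norm (x 0) < 1"
    then show "(x \<longlongrightarrow> 0) at_top"
      using conv[of "(*) (- \<beta>)" x \<beta>] b c by auto
  qed simp
qed



lemma mono_aux:
  fixes c y :: real assumes "0 \<le> c" "c \<le> y"
  shows "c / sqrt (1 + c\<^sup>2) \<le> y / sqrt (1 + y\<^sup>2)"
proof -
  have p: "\<And>z::real. 0 < sqrt (1 + z\<^sup>2)" by (simp add: add_pos_nonneg)
  have "c\<^sup>2 \<le> y\<^sup>2" using assms by (simp add: power_mono)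
  then have "c\<^sup>2 * (1 + y\<^sup>2) \<le> y\<^sup>2 * (1 + c\<^sup>2)" by (simp add: algebra_simps)
  then have "sqrt (c\<^sup>2 * (1 + y\<^sup>2)) \<le> sqrt (y\<^sup>2 * (1 + c\<^sup>2))" by simp
  then have "c * sqrt (1 + y\<^sup>2) \<le> y * sqrt (1 + c\<^sup>2)"
    using assms by (simp add: real_sqrt_mult)
  then show ?thesis using p[of c] p[of y] by (simp add: divide_simps)
qed

lemma siss:
  fixes \<epsilon> \<beta> :: real assumes e1: "\<epsilon> > 1" and b: "\<beta> > 0"
  shows "SISS_L (\<beta> / 2) (2 * \<epsilon> / \<beta>) (\<lambda>x::real. - \<beta> * x / sqrt (1 + x\<^sup>2))"
  unfolding SISS_L_def
proof (intro allI impI)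
  fix \<delta> :: real and e x :: "real \<Rightarrow> real"
  assume d: "0 < \<delta> \<and> \<delta> \<le> \<beta> / 2"
  assume ein: "bounded_measurable_input e \<and> eventually_bounded e \<delta>"
  assume ps: "perturbed_solution (\<lambda>x::real. - \<beta> * x / sqrt (1 + x\<^sup>2)) e x"
  define f where "f = (\<lambda>x::real. - \<beta> * x / sqrt (1 + x\<^sup>2))"
  define g where "g = (\<lambda>s. f (x s) + e s)"
  have p: "\<And>z::real. 0 < sqrt (1 + z\<^sup>2)" by (simp add: add_pos_nonneg)
  have h: "\<forall>t\<ge>0. (g has_integral (x t - x 0)) {0..t}"
    using ps unfolding perturbed_solution_def g_def f_def by auto
  have segs: "(g has_integral (x t - x s)) {s..t}" if "0 \<le> s" "s \<le> t" for s t
    using seg[OF h that] .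
  obtain B where B: "\<And>s. s \<ge> 0 \<Longrightarrow> \<bar>e s\<bar> \<le> B"
    using ein unfolding bounded_measurable_input_def bounded_iff by force
  obtain T where T: "T > 0" "\<And>t. t \<ge> T \<Longrightarrow> \<bar>e t\<bar> \<le> \<delta>"
    using ein unfolding eventually_bounded_def by force
  have fb: "\<bar>f y\<bar> \<le> \<beta>" for y
  proof -
    have "\<bar>y\<bar> \<le> sqrt (1 + y\<^sup>2)"
      using real_sqrt_le_mono[of "y\<^sup>2" "1 + y\<^sup>2"] by simp
    then have "\<bar>y\<bar> / sqrt (1 + y\<^sup>2) \<le> 1" using p[of y] by simp
    then have "\<beta> * (\<bar>y\<bar> / sqrt (1 + y\<^sup>2)) \<le> \<beta> * 1" by (rule mult_left_mono) (use b in auto)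
    moreover have "\<bar>f y\<bar> = \<beta> * (\<bar>y\<bar> / sqrt (1 + y\<^sup>2))"
      unfolding f_def using b p[of y] by (simp add: abs_mult abs_divide)
    ultimately show ?thesis by simp
  qed
  have B0: "0 \<le> B" using B[of 0] by simp
  have lip: "\<bar>x t - x s\<bar> \<le> (\<beta> + B) * (t - s)" if "0 \<le> s" "s \<le> t" for s t
  proof -
    have "norm (x t - x s) \<le> (\<beta> + B) * Henstock_Kurzweil_Integration.content {s..t}"
    proof (rule has_integral_bound_real[OF _ _ segs[OF that], where S="{}"])
      show "0 \<le> \<beta> + B" using b B0 by simp
      fix u assume "u \<in> {s..t} - {}"
      then have "0 \<le> u" using that by auto
      then show "norm (g u) \<le> \<beta> + B" unfolding g_def using fb[of "x u"] B[of u] by simp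
    qed simp
    then show ?thesis using that by simp
  qed
  have cont: "continuous_on {0..} x"
    unfolding continuous_on_iff
  proof (intro ballI allI impI)
    fix t r :: real assume t: "t \<in> {0..}" and r: "0 < r"
    show "\<exists>d>0. \<forall>s\<in>{0..}. dist s t < d \<longrightarrow> dist (x s) (x t) < r"
    proof (intro exI[of _ "r / (\<beta> + B + 1)"] conjI ballI impI)
      show "0 < r / (\<beta> + B + 1)" using r b B0 by simp
      fix s assume s: "s \<in> {0..}" and ds: "dist s t < r / (\<beta> + B + 1)"
      have "\<bar>x s - x t\<bar> \<le> (\<beta> + B) * \<bar>s - t\<bar>"
      proof (cases "s \<le> t")
        case True then show ?thesis using lip[of s t] s by (simp add: abs_minus_commute)
      next
        case False then show ?thesis using lip[of t s] t by simp
      qed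
      also have "\<dots> \<le> (\<beta> + B + 1) * \<bar>s - t\<bar>" by (simp add: mult_right_mono)
      also have "\<dots> < r"
        using ds b B0 by (simp add: dist_real_def field_simps)
      finally show "dist (x s) (x t) < r" by (simp add: dist_real_def)
    qed
  qed
  define c1 where "c1 = 2 * \<delta> / \<beta>"
  define a where "a = \<beta> * (c1 / sqrt (1 + c1\<^sup>2))"
  have c1p: "c1 > 0" unfolding c1_def using d b by simp
  have c1le: "c1 \<le> 1" unfolding c1_def using d b by (simp add: field_simps)
  have "sqrt (1 + c1\<^sup>2) < 2"
  proof -
    have "1 + c1\<^sup>2 < 4" using c1le c1p power_mono[of c1 1 2] by simp
    then have "sqrt (1 + c1\<^sup>2) < sqrt (2\<^sup>2)" by (intro real_sqrt_less_mono) simp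
    moreover have "sqrt (2\<^sup>2) = (2::real)" by (simp only: real_sqrt_abs)
    ultimately show ?thesis by simp
  qed
  then have "a > \<delta>"
    unfolding a_def c1_def using b d p[of "2 * \<delta> / \<beta>"] by (simp add: field_simps)
  define \<eta> where "\<eta> = a - \<delta>"
  have etap: "\<eta> > 0" unfolding \<eta>_def using \<open>a > \<delta>\<close> by simp
  have fpos: "f y \<le> - a" if "y \<ge> c1" for y
  proof -
    have "c1 / sqrt (1 + c1\<^sup>2) \<le> y / sqrt (1 + y\<^sup>2)" using mono_aux[OF _ that] c1p by simp
    then have "\<beta> * (c1 / sqrt (1 + c1\<^sup>2)) \<le> \<beta> * (y / sqrt (1 + y\<^sup>2))" by (rule mult_left_mono) (use b in auto)
    then show ?thesis unfolding a_def f_def by simp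
  qed
  have fneg: "f y \<ge> a" if "y \<le> - c1" for y
  proof -
    have "f (- y) \<le> - a" using fpos[of "-y"] that by simp
    moreover have "f (- y) = - f y" unfolding f_def by simp
    ultimately show ?thesis by simp
  qed
  have H2: "x t \<le> x s - \<eta> * (t - s)" if "T \<le> s" "s \<le> t" "\<forall>u\<in>{s..t}. x u \<ge> c1" for s t
  proof -
    have "x t - x s \<le> Henstock_Kurzweil_Integration.content {s..t} *\<^sub>R (- \<eta>)"
    proof (rule has_integral_le[OF segs has_integral_const_real])
      show "0 \<le> s" "s \<le> t" using that T by auto
      fix u assume u: "u \<in> {s..t}"
      then have "f (x u) \<le> - a" "e u \<le> \<delta>" using fpos that T(2)[of u] by auto
      then show "g u \<le> - \<eta>" unfolding g_def \<eta>_def by simp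
    qed
    then show ?thesis using that by (simp add: algebra_simps)
  qed
  have H3: "- x t \<le> - x s - \<eta> * (t - s)" if "T \<le> s" "s \<le> t" "\<forall>u\<in>{s..t}. - x u \<ge> c1" for s t
  proof -
    have "Henstock_Kurzweil_Integration.content {s..t} *\<^sub>R \<eta> \<le> x t - x s"
    proof (rule has_integral_le[OF has_integral_const_real segs])
      show "0 \<le> s" "s \<le> t" using that T by auto
      fix u assume u: "u \<in> {s..t}"
      then have "c1 \<le> - x u" "T \<le> u" using that by auto
      then have "x u \<le> - c1" "T \<le> u" by linarith+
      then have "f (x u) \<ge> a" "e u \<ge> - \<delta>" using fneg T(2)[of u] by auto
      then show "\<eta> \<le> g u" unfolding g_def \<eta>_def by simp
    qed
    then show ?thesis using that by (simp add: algebra_simps)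
  qed
  obtain T' where T': "T' > 0" "\<forall>t\<ge>T'. \<bar>x t\<bar> \<le> c1"
    using core[OF cont H2 H3 _ etap c1p] T by force
  have "c1 \<le> 2 * \<epsilon> / \<beta> * \<delta>" unfolding c1_def using e1 b d by (simp add: field_simps)
  then show "eventually_bounded x (2 * \<epsilon> / \<beta> * \<delta>)"
    unfolding eventually_bounded_def using T' by force
qed


theorem lemma2:
  fixes \<epsilon> \<beta> :: real
  assumes "\<epsilon> > 1" and "\<beta> > 0"
  defines "f \<equiv> (\<lambda>x::real. - \<beta> * x / sqrt (1 + x\<^sup>2))"
  shows "SISS_L (\<beta> / 2) (2 * \<epsilon> / \<beta>) f
       \<and> globally_asymptotically_stable_origin f
       \<and> linearization_asymptotically_stable f"
  unfolding f_def using siss[OF assms(1,2)] gas[OF assms(2)] lin[OF assms(2)] by blast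

end
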